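(* Let $\xi$ be a positive random variable such that for some $c>0$, $-\log P(\xi>t)\sim ct$ as $t\to\infty$, and let $\xi_1,\xi_2$ be independent copies of $\xi$. Then $$-\log E\Big[\exp\big(-\lambda/(\xi_1+\xi_2)^2\big)\Big]\sim 3\,(c/2)^{2/3}\lambda^{1/3}\quad\text{as }\lambda\to\infty.$$
   Context: $f\sim g$ means $f/g\to1$. *)

theory Defs
  imports "HOL-Probability.Probability" "HOL-Library.Landau_Symbols"
begin

end

theory Submission
  imports Defs "HOL-Real_Asymp.Real_Asymp"
begin



lemma amgm:
  fixes a y u :: real
  assumes "a > 0" "y > 0" "u \<ge> 0"
  shows "u^3/y^2 + (2/a^3) * y \<ge> 3*u/a^2"
proof -
  have "(u*a - y)^2 * (u*a + 2 * y) \<ge> 0" using assms by simp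
  hence "(u * a)^3 + 2 * y^3 - 3 * (u * a) * y^2 \<ge> 0" by (simp add: algebra_simps power2_eq_square power3_eq_cube)
  hence "u^3 * a^3 + 2 * y^3 \<ge> 3 * u * a * y^2" by (simp add: algebra_simps power3_eq_cube power2_eq_square)
  hence "(u^3*a^3 + 2*y^3)/(y^2*a^3) \<ge> 3*u*a*y^2/(y^2*a^3)" using assms
    by (intro divide_right_mono) auto
  moreover have "(u^3*a^3 + 2*y^3)/(y^2*a^3) = u^3/y^2 + (2/a^3) * y" using assms
    by (simp add: field_simps power2_eq_square power3_eq_cube)
  moreover have "3*u*a*y^2/(y^2*a^3) = 3*u/a^2" using assms
    by (simp add: field_simps power2_eq_square power3_eq_cube)
  ultimately show ?thesis by simp
qed

lemma amgm_theta:
  fixes a y u th :: real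
  assumes "a > 0" "y > 0" "u \<ge> 0" "th > 0"
  shows "u^3/y^2 + (2/a^3) * th^3 * y \<ge> th^2 * (3*u/a^2)"
proof -
  have "u^3/(th * y)^2 + (2/a^3) * (th * y) \<ge> 3*u/a^2" using assms by (intro amgm) auto
  hence "th^2 * (u^3/(th * y)^2 + (2/a^3) * (th * y)) \<ge> th^2 * (3*u/a^2)"
    by (intro mult_left_mono) auto
  moreover have "th^2 * (u^3/(th * y)^2 + (2/a^3) * (th * y)) = u^3/y^2 + (2/a^3) * th^3 * y"
    using assms by (simp add: field_simps power2_eq_square power3_eq_cube)
  ultimately show ?thesis by simp
qed

lemma ratio_lemma:
  fixes f g :: "real \<Rightarrow> real"
  assumes "\<And>e. e > 0 \<Longrightarrow> eventually (\<lambda>x. (1-e)*g x \<le> f x \<and> f x \<le> (1+e)*g x) F"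
    and "eventually (\<lambda>x. g x > 0) F"
  shows "f \<sim>[F] g"
proof (rule asymp_equivI')
  show "((\<lambda>x. f x / g x) \<longlongrightarrow> 1) F"
  proof (rule tendstoI)
    fix e :: real assume e: "e > 0"
    have "eventually (\<lambda>x. (1-e/2)*g x \<le> f x \<and> f x \<le> (1+e/2)*g x) F" using e assms(1)[of "e/2"] by simp
    with assms(2) show "eventually (\<lambda>x. dist (f x / g x) 1 < e) F"
    proof eventually_elim
      case (elim x)
      have "(1-e/2) \<le> f x / g x" "f x / g x \<le> 1+e/2" using elim by (auto simp: field_simps)
      then show ?case using e by (auto simp: dist_real_def abs_if)
    qed
  qed
qed



lemma ennreal_term_le_suminf: "(f::nat\<Rightarrow>ennreal) n \<le> suminf f"
  using sum_le_suminf[of f "{n}"] by (simp add: summableI)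

lemma expmom:
  fixes M :: "'a measure" and X :: "'a \<Rightarrow> real"
  assumes P: "prob_space M" and Xm: "X \<in> borel_measurable M"
    and c: "0 < c1" "c1 < c2" and T: "T \<ge> 0"
    and tail: "\<And>t. t \<ge> T \<Longrightarrow> measure M {\<omega> \<in> space M. X \<omega> > t} \<le> exp (- c2 * t)"
  shows "integrable M (\<lambda>\<omega>. exp (c1 * X \<omega>))"
proof -
  interpret prob_space M by fact
  define A where "A n = {\<omega> \<in> space M. X \<omega> > real n}" for n :: nat
  have Asets[measurable]: "A n \<in> sets M" for n unfolding A_def using Xm by measurable
  define q where "q = exp (c1 - c2)"
  define N where "N = nat \<lceil>T\<rceil>"
  define C where "C = exp c1 * exp (c2 * N)"
  have q: "0 < q" "q < 1" using c by (auto simp: q_def)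
  have pw: "ennreal (exp (c1 * X \<omega>)) \<le> 1 + (\<Sum>n. ennreal (exp (c1 * (real n + 1))) * indicator (A n) \<omega>)"
    if "\<omega> \<in> space M" for \<omega>
  proof (cases "X \<omega> \<le> 0")
    case True
    then have "exp (c1 * X \<omega>) \<le> 1" using c by (simp add: mult_nonneg_nonpos)
    then have "ennreal (exp (c1 * X \<omega>)) \<le> 1" by (simp add: ennreal_le_1 ennreal_leI)
    then show ?thesis by (meson add_increasing2 order.trans zero_le)
  next
    case False
    define n where "n = nat \<lceil>X \<omega>\<rceil> - 1"
    have n1: "real n < X \<omega>" "X \<omega> \<le> real n + 1" using False unfolding n_def
      by (auto simp: of_nat_diff) linarith+
    have "exp (c1 * X \<omega>) \<le> exp (c1 * (real n + 1))" using n1 c by simp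
    then have "ennreal (exp (c1 * X \<omega>)) \<le> ennreal (exp (c1 * (real n + 1))) * indicator (A n) \<omega>"
      using n1 that by (simp add: A_def ennreal_leI)
    also have "\<dots> \<le> (\<Sum>n. ennreal (exp (c1 * (real n + 1))) * indicator (A n) \<omega>)"
      by (rule ennreal_term_le_suminf)
    finally show ?thesis by (meson add_increasing order.trans zero_le)
  qed
  have bound: "exp (c1 * (real n + 1)) * measure M (A n) \<le> C * q ^ n" for n :: nat
  proof (cases "n \<ge> N")
    case True
    then have "real n \<ge> T" unfolding N_def by linarith
    then have "measure M (A n) \<le> exp (- c2 * n)" using tail unfolding A_def by simp
    then have "exp (c1 * (real n + 1)) * measure M (A n) \<le> exp (c1 * (real n + 1)) * exp (- c2 * n)"
      by (intro mult_left_mono) auto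
    also have "\<dots> = exp c1 * q ^ n" unfolding q_def
      by (simp add: exp_of_nat_mult[symmetric] exp_add[symmetric] algebra_simps)
    also have "\<dots> \<le> C * q ^ n" unfolding C_def using c q by (intro mult_right_mono) auto
    finally show ?thesis .
  next
    case False
    have "exp (c1 * (real n + 1)) * measure M (A n) \<le> exp (c1 * (real n + 1))"
      by (simp add: mult_left_le)
    also have "\<dots> = exp c1 * q ^ n * exp (c2 * n)" unfolding q_def
      by (simp add: exp_of_nat_mult[symmetric] exp_add[symmetric] algebra_simps)
    also have "\<dots> \<le> exp c1 * q ^ n * exp (c2 * N)" using False c q
      by (intro mult_left_mono) auto
    finally show ?thesis unfolding C_def by (simp add: algebra_simps)
  qed
  have sumq: "summable (\<lambda>n. C * q ^ n)" using q by (intro summable_mult summable_geometric) auto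
  have "(\<integral>\<^sup>+\<omega>. ennreal (exp (c1 * X \<omega>)) \<partial>M)
        \<le> (\<integral>\<^sup>+\<omega>. 1 + (\<Sum>n. ennreal (exp (c1 * (real n + 1))) * indicator (A n) \<omega>) \<partial>M)"
    by (intro nn_integral_mono pw)
  also have "\<dots> = 1 + (\<Sum>n. ennreal (exp (c1 * (real n + 1))) * emeasure M (A n))"
    by (subst nn_integral_add) (auto simp: nn_integral_suminf nn_integral_cmult_indicator emeasure_space_1)
  also have "\<dots> \<le> 1 + (\<Sum>n. ennreal (C * q ^ n))"
  proof (intro add_left_mono suminf_le)
    fix n
    show "ennreal (exp (c1 * (real n + 1))) * emeasure M (A n) \<le> ennreal (C * q ^ n)"
      using bound[of n] by (simp add: emeasure_eq_measure ennreal_mult[symmetric] ennreal_leI)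
  qed auto
  also have "\<dots> < \<infinity>"
  proof -
    have "(\<Sum>n. ennreal (C * q ^ n)) \<noteq> top"
      using sumq q by (intro ennreal_suminf_neq_top) (auto simp: C_def)
    then show ?thesis by (simp add: less_top[symmetric])
  qed
  finally show ?thesis using Xm by (intro integrableI_nonneg) auto
qed


theorem lemma4p2:
  fixes M :: "'a measure" and X1 X2 :: "'a \<Rightarrow> real" and c :: real
  assumes "prob_space M"
    and "X1 \<in> borel_measurable M" and "X2 \<in> borel_measurable M"
    and "prob_space.indep_var M borel X1 borel X2"
    and "distr M borel X1 = distr M borel X2"
    and "AE \<omega> in M. X1 \<omega> > 0"
    and "c > 0"
    and "(\<lambda>t. - ln (measure M {\<omega> \<in> space M. X1 \<omega> > t})) \<sim>[at_top] (\<lambda>t. c * t)"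
  shows "(\<lambda>l. - ln (integral\<^sup>L M (\<lambda>\<omega>. exp (- l / (X1 \<omega> + X2 \<omega>)\<^sup>2))))
           \<sim>[at_top] (\<lambda>l. 3 * (c / 2) powr (2/3) * l powr (1/3))"
proof -
  interpret P: prob_space M by fact
  note X1m[measurable] = assms(2) and X2m[measurable] = assms(3)
  have cpos: "c > 0" by fact
  define F where "F t = measure M {\<omega> \<in> space M. X1 \<omega> > t}" for t
  define S where "S \<omega> = X1 \<omega> + X2 \<omega>" for \<omega>
  have Sm[measurable]: "S \<in> borel_measurable M" unfolding S_def by measurable
  define L where "L u = integral\<^sup>L M (\<lambda>\<omega>. exp (- (u^3) / (S \<omega>)^2))" for u :: real
  define a where "a = (2/c) powr (1/3)"
  have apos: "a > 0" unfolding a_def using cpos by simp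
  have a3: "a^3 = 2/c" unfolding a_def using cpos
    by (simp add: powr_realpow[symmetric] powr_powr)
  have ca: "c = 2/a^3" using a3 apos cpos by (simp add: field_simps)
  have Kdef: "3 * (c/2) powr (2/3) = 3/a^2"
  proof -
    have "(c/2) powr (2/3) = inverse ((2/c) powr (2/3))" using cpos
      by (simp add: powr_divide)
    also have "(2/c) powr (2/3) = a^2" unfolding a_def using cpos
      by (simp add: powr_realpow[symmetric] powr_powr)
    finally show ?thesis by (simp add: inverse_eq_divide)
  qed
  have AE1: "AE \<omega> in M. X1 \<omega> > 0" by fact
  have AE2: "AE \<omega> in M. X2 \<omega> > 0"
  proof -
    have "AE x in distr M borel X1. x > 0" using AE1 by (subst AE_distr_iff) auto
    then have "AE x in distr M borel X2. x > 0" by (metis assms(5))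
    then show ?thesis by (subst (asm) AE_distr_iff) auto
  qed
  have Feq2: "measure M {\<omega> \<in> space M. X2 \<omega> > t} = F t" for t
  proof -
    have "measure M {\<omega> \<in> space M. X2 \<omega> > t} = measure (distr M borel X2) {t<..}"
      by (subst measure_distr) (auto intro!: arg_cong[where f="measure M"])
    also have "\<dots> = measure (distr M borel X1) {t<..}" using assms(5) by simp
    also have "\<dots> = F t" unfolding F_def
      by (subst measure_distr) (auto intro!: arg_cong[where f="measure M"])
    finally show ?thesis .
  qed
  have tail: "eventually (\<lambda>t. (c-d)*t \<le> - ln (F t) \<and> - ln (F t) \<le> (c+d)*t) at_top" if d: "d > 0" for d
  proof -
    have "((\<lambda>t. - ln (F t) / (c * t)) \<longlongrightarrow> 1) at_top"
      using assms(8) unfolding F_def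
    proof (rule asymp_equivD_strong)
      show "\<forall>\<^sub>F x in at_top. - ln (measure M {\<omega> \<in> space M. X1 \<omega> > x}) \<noteq> 0 \<or> c * x \<noteq> 0"
        using eventually_gt_at_top[of 0] by eventually_elim (use cpos in auto)
    qed
    then have "eventually (\<lambda>t. dist (- ln (F t) / (c * t)) 1 < d/c) at_top"
      using d cpos by (intro tendstoD) auto
    with eventually_gt_at_top[of 0] show ?thesis
    proof eventually_elim
      case (elim t)
      then have "\<bar>- ln (F t) / (c * t) - 1\<bar> < d/c" by (simp add: dist_real_def)
      then have r: "1 - d/c < - ln (F t) / (c * t)" "- ln (F t) / (c * t) < 1 + d/c" by linarith+
      have ct: "c * t > 0" using elim cpos by simp
      have x: "- ln (F t) = (- ln (F t) / (c * t)) * (c * t)" using cpos elim by simp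
      have "(1 - d/c) * (c * t) < (- ln (F t) / (c * t)) * (c * t)"
        using r(1) ct by (intro mult_strict_right_mono) auto
      moreover have "(- ln (F t) / (c * t)) * (c * t) < (1 + d/c) * (c * t)"
        using r(2) ct by (intro mult_strict_right_mono) auto
      moreover have "(1 - d/c) * (c * t) = (c - d) * t" "(1 + d/c) * (c * t) = (c + d) * t"
        using cpos by (simp_all add: field_simps)
      ultimately show ?case using x by auto
    qed
  qed
  have Fpos: "eventually (\<lambda>t. F t > 0) at_top"
  proof -
    have "0 < c/2" using cpos by simp
    from tail[OF this] eventually_gt_at_top[of 0] show ?thesis
  proof eventually_elim
    case (elim t)
    have "0 < (c - c/2) * t" using elim cpos by simp
    with elim have "ln (F t) < 0" by linarith
    moreover have "F t \<ge> 0" unfolding F_def by simp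
    ultimately show ?case by (cases "F t = 0") auto
  qed
  qed
  have intL: "integrable M (\<lambda>\<omega>. exp (- (u^3) / (S \<omega>)^2))" if u: "u \<ge> 0" for u
    by (rule P.integrable_const_bound[where B=1]) (use u in \<open>auto intro!: AE_I2 simp: divide_nonneg_nonneg\<close>)
  define K where "K = 3 / a^2"
  have Kpos: "K > 0" unfolding K_def using apos by simp
  have UB: "eventually (\<lambda>u. 0 < L u \<and> - ln (L u) \<le> (1+e) * K * u) at_top" if e: "e > 0" for e
  proof -
    define d where "d = e / a^3"
    have d: "d > 0" unfolding d_def using e apos by simp
    from eventually_conj[OF tail[OF d] Fpos] obtain T where
      T: "\<And>t. t \<ge> T \<Longrightarrow> - ln (F t) \<le> (c+d)*t \<and> F t > 0"
      unfolding eventually_at_top_linorder by blast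
    show ?thesis using eventually_ge_at_top[of "max 1 (T/a)"]
    proof eventually_elim
      case (elim u)
      define t where "t = a * u"
      have u: "u \<ge> 1" "u \<ge> T/a" using elim by auto
      have tpos: "t > 0" unfolding t_def using apos u by simp
      have tT: "t \<ge> T" unfolding t_def using u apos by (simp add: field_simps)
      from T[OF tT] have Ft: "- ln (F t) \<le> (c+d)*t" "F t > 0" by auto
      define A where "A = {\<omega> \<in> space M. X1 \<omega> > t}"
      have [measurable]: "A \<in> sets M" unfolding A_def by measurable
      have "integral\<^sup>L M (\<lambda>\<omega>. exp (- (u^3) / t^2) * indicator A \<omega>) \<le> L u"
        unfolding L_def
      proof (rule integral_mono_AE)
        show "integrable M (\<lambda>\<omega>. exp (- (u^3) / t^2) * indicator A \<omega>)"
          by (intro integrable_mult_right integrable_real_indicator) (auto simp: P.emeasure_eq_measure)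
        show "integrable M (\<lambda>\<omega>. exp (- (u^3) / (S \<omega>)^2))" using u by (intro intL) auto
        show "AE \<omega> in M. exp (- (u^3) / t^2) * indicator A \<omega> \<le> exp (- (u^3) / (S \<omega>)^2)"
          using AE2
        proof eventually_elim
          case (elim \<omega>)
          show ?case
          proof (cases "\<omega> \<in> A")
            case True
            then have "S \<omega> > t" unfolding A_def S_def using elim by auto
            then have "t^2 \<le> (S \<omega>)^2" using tpos by (intro power_mono) auto
            moreover have "0 < (S \<omega>)^2 * t^2" using tpos \<open>S \<omega> > t\<close> by simp
            ultimately have "u^3 / (S \<omega>)^2 \<le> u^3 / t^2" using tpos u
              by (intro divide_left_mono) auto
            then show ?thesis using True by simp
          qed simp
        qed
      qed
      also have "integral\<^sup>L M (\<lambda>\<omega>. exp (- (u^3) / t^2) * indicator A \<omega>) = exp (- (u^3) / t^2) * F t"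
        by (simp add: F_def A_def)
      finally have LL: "exp (- (u^3) / t^2) * F t \<le> L u" .
      have ppos: "exp (- (u^3) / t^2) * F t > 0" using Ft by simp
      have "- ln (L u) \<le> - ln (exp (- (u^3) / t^2) * F t)"
        using LL ppos by simp
      also have "\<dots> = u^3 / t^2 - ln (F t)" using Ft by (simp add: ln_mult)
      also have "\<dots> \<le> u^3 / t^2 + (c+d)*t" using Ft by simp
      also have "u^3 / t^2 + (c+d)*t = K * u + e * u / a^2"
        unfolding t_def K_def d_def ca using apos u by (simp add: field_simps power2_eq_square power3_eq_cube)
      also have "\<dots> \<le> (1+e) * K * u" unfolding K_def using apos u e
        by (simp add: field_simps)
      finally show ?case using LL ppos by simp
    qed
  qed
  have LB: "eventually (\<lambda>u. (1-e) * K * u \<le> - ln (L u) \<and> - ln (L u) \<le> (1+e) * K * u) at_top"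
    if e: "e > 0" for e
  proof -
    define m where "m = min e 1"
    define th where "th = 1 - m/4"
    have m: "0 < m" "m \<le> 1" "m \<le> e" using e by (auto simp: m_def)
    have th: "0 < th" "th < 1" using m by (auto simp: th_def)
    have th2: "th^2 \<ge> 1 - e/2"
    proof -
      have "th^2 = 1 - m/2 + m^2/16" by (simp add: th_def power2_eq_square field_simps)
      moreover have "m^2/16 \<ge> 0" by simp
      ultimately show ?thesis using m by linarith
    qed
    define c1 where "c1 = c * th^3"
    define c2 where "c2 = (c + c1)/2"
    have th3: "th^3 < 1" using th power_strict_mono[of th 1 3] by simp
    have c1: "0 < c1" "c1 < c2" "c2 < c" unfolding c2_def c1_def using cpos th th3 by auto
    have "c - c2 > 0" using c1 by simp
    from eventually_conj[OF tail[OF this] Fpos] obtain T where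
      T: "\<And>t. t \<ge> T \<Longrightarrow> (c - (c - c2))*t \<le> - ln (F t) \<and> F t > 0"
      unfolding eventually_at_top_linorder by blast
    have tl: "F t \<le> exp (- c2 * t)" if "t \<ge> max T 0" for t
    proof -
      from T[of t] that have "c2 * t \<le> - ln (F t)" "F t > 0" by auto
      then have "ln (F t) \<le> - c2 * t" by simp
      then have "exp (ln (F t)) \<le> exp (- c2 * t)" by simp
      then show ?thesis using \<open>F t > 0\<close> by simp
    qed
    have I1: "integrable M (\<lambda>\<omega>. exp (c1 * X1 \<omega>))"
      by (rule expmom[OF assms(1) X1m c1(1) c1(2), of "max T 0"]) (use tl in \<open>auto simp: F_def\<close>)
    have I2: "integrable M (\<lambda>\<omega>. exp (c1 * X2 \<omega>))"
      by (rule expmom[OF assms(1) X2m c1(1) c1(2), of "max T 0"]) (use tl in \<open>auto simp: Feq2\<close>)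
    define B where "B = integral\<^sup>L M (\<lambda>\<omega>. exp (c1 * X1 \<omega>)) * integral\<^sup>L M (\<lambda>\<omega>. exp (c1 * X2 \<omega>))"
    have indep: "P.indep_var borel (\<lambda>\<omega>. exp (c1 * X1 \<omega>)) borel (\<lambda>\<omega>. exp (c1 * X2 \<omega>))"
      using P.indep_var_compose[OF assms(4), of "\<lambda>x. exp (c1 * x)" borel "\<lambda>x. exp (c1 * x)" borel]
      by (simp add: comp_def)
    have Bint: "integral\<^sup>L M (\<lambda>\<omega>. exp (c1 * X1 \<omega>) * exp (c1 * X2 \<omega>)) = B"
      unfolding B_def by (rule P.indep_var_lebesgue_integral[OF indep I1 I2])
    have Iprod: "integrable M (\<lambda>\<omega>. exp (c1 * X1 \<omega>) * exp (c1 * X2 \<omega>))"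
      by (rule P.indep_var_integrable[OF indep I1 I2])
    have Lle: "L u \<le> exp (- (th^2 * K * u)) * B" if u: "u \<ge> 0" for u
    proof -
      have "L u \<le> integral\<^sup>L M (\<lambda>\<omega>. exp (- (th^2 * K * u)) * (exp (c1 * X1 \<omega>) * exp (c1 * X2 \<omega>)))"
        unfolding L_def
      proof (rule integral_mono_AE)
        show "integrable M (\<lambda>\<omega>. exp (- (u^3) / (S \<omega>)^2))" using u by (rule intL)
        show "integrable M (\<lambda>\<omega>. exp (- (th^2 * K * u)) * (exp (c1 * X1 \<omega>) * exp (c1 * X2 \<omega>)))"
          using Iprod by (rule integrable_mult_right)
        show "AE \<omega> in M. exp (- (u^3) / (S \<omega>)^2) \<le> exp (- (th^2 * K * u)) * (exp (c1 * X1 \<omega>) * exp (c1 * X2 \<omega>))"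
          using AE1 AE2
        proof eventually_elim
          case (elim \<omega>)
          have Sp: "S \<omega> > 0" unfolding S_def using elim by simp
          have "u^3/(S \<omega>)^2 + (2/a^3) * th^3 * S \<omega> \<ge> th^2 * (3*u/a^2)"
            using amgm_theta[OF apos Sp u th(1)] .
          then have "- (u^3) / (S \<omega>)^2 \<le> c1 * S \<omega> - th^2 * K * u"
            unfolding c1_def ca K_def by (simp add: field_simps)
          then have "exp (- (u^3) / (S \<omega>)^2) \<le> exp (c1 * S \<omega> - th^2 * K * u)" by simp
          also have "\<dots> = exp (- (th^2 * K * u)) * (exp (c1 * X1 \<omega>) * exp (c1 * X2 \<omega>))"
            unfolding S_def by (simp add: exp_add[symmetric] exp_diff algebra_simps)
          finally show ?case .
        qed
      qed
      also have "\<dots> = exp (- (th^2 * K * u)) * B" using Bint by simp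
      finally show ?thesis .
    qed
    show ?thesis using UB[OF e] eventually_ge_at_top[of "max 0 (2 * \<bar>ln B\<bar> / (e * K))"]
    proof eventually_elim
      case (elim u)
      have u: "u \<ge> 0" "u \<ge> 2 * \<bar>ln B\<bar> / (e * K)" using elim by auto
      have Lp: "L u > 0" using elim by simp
      have LB': "L u \<le> exp (- (th^2 * K * u)) * B" using Lle[OF u(1)] .
      have Bp: "B > 0"
      proof (rule ccontr)
        assume "\<not> B > 0"
        then have "exp (- (th^2 * K * u)) * B \<le> 0" by (simp add: mult_nonneg_nonpos)
        with LB' Lp show False by simp
      qed
      have "- ln (exp (- (th^2 * K * u)) * B) \<le> - ln (L u)" using LB' Lp by simp
      moreover have "- ln (exp (- (th^2 * K * u)) * B) = th^2 * K * u - ln B" using Bp by (simp add: ln_mult)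
      moreover have "e * K * u \<ge> 2 * \<bar>ln B\<bar>" using u(2) e Kpos by (simp add: field_simps)
      moreover have "th^2 * K * u \<ge> (1 - e/2) * K * u" using th2 Kpos u(1)
        by (intro mult_right_mono) auto
      moreover have "(1-e) * K * u = (1 - e/2) * K * u - (e * K * u)/2" by (simp add: algebra_simps)
      moreover have "ln B \<le> \<bar>ln B\<bar>" by simp
      ultimately have "(1-e) * K * u \<le> - ln (L u)" by linarith
      then show ?case using elim by simp
    qed
  qed
  show ?thesis
  proof (rule ratio_lemma)
    fix e :: real assume e: "e > 0"
    have lim: "filterlim (\<lambda>l::real. l powr (1/3)) at_top at_top" by real_asymp
    from filterlim_iff[THEN iffD1, OF lim, rule_format, OF LB[OF e]] eventually_gt_at_top[of 0]
    show "eventually (\<lambda>l. (1-e) * (3 * (c / 2) powr (2/3) * l powr (1/3))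
            \<le> - ln (integral\<^sup>L M (\<lambda>\<omega>. exp (- l / (X1 \<omega> + X2 \<omega>)\<^sup>2))) \<and>
          - ln (integral\<^sup>L M (\<lambda>\<omega>. exp (- l / (X1 \<omega> + X2 \<omega>)\<^sup>2))) \<le> (1+e) * (3 * (c / 2) powr (2/3) * l powr (1/3))) at_top"
    proof eventually_elim
      case (elim l)
      have "(l powr (1/3))^3 = l" using elim by (simp add: powr_realpow[symmetric] powr_powr)
      then have "L (l powr (1/3)) = integral\<^sup>L M (\<lambda>\<omega>. exp (- l / (X1 \<omega> + X2 \<omega>)\<^sup>2))"
        unfolding L_def S_def by simp
      moreover have KK: "3 * (c / 2) powr (2/3) = K" using Kdef K_def by simp
      ultimately show ?case using elim unfolding KK by (simp only: mult.assoc)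
    qed
  next
    show "eventually (\<lambda>l. 3 * (c / 2) powr (2/3) * l powr (1/3) > 0) at_top"
      using eventually_gt_at_top[of 0] by eventually_elim (use cpos in simp)
  qed
qed

end
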